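(* Under the hypotheses of the one-step equivalence result (with $ev$, $rb$, $su=ev$, $hy$ as defined there), $hy$ absorbs $ev$: $hy\circ ev = hy$ as partial functions on terms.
   Context: Terms: $\Lambda ::= x\mid\lambda x.\Lambda\mid\Lambda\Lambda$; $[N/x]B$ is capture-avoiding substitution. An evaluator is a partial function $\Lambda\rightharpoonup\Lambda$ defined by inference rules, undefined where no finite derivation exists; $\mathrm{id}$ is the identity; composition is undefined where the inner evaluator is. Eval-apply template: given evaluators $la,op_1,ar_1,op_2,ar_2$ (possibly $ea$ itself), $ea$ is defined by (var) $ea(x)=x$; (abs) $ea(\lambda x.B)=\lambda x.B'$ if $la(B)=B'$; (con) $ea(MN)=B'$ if $op_1(M)=\lambda x.B$, $ar_1(N)=N'$, $ea([N'/x]B)=B'$; (neu) $ea(MN)=M''N'$ if $op_1(M)=M'$, $M'$ not an abstraction, $op_2(M')=M''$, $ar_2(N)=N'$. $ev$ is a uniform evaluator: $op_1=ev$, $op_2=\mathrm{id}$, $la=la_e$, $ar_1=ar1_e$, $ar_2=ar2_e$ with each in $\{\mathrm{id},ev\}$. Readback: $rb(x)=x$; $rb(\lambda x.B)=\lambda x.B'$ if $la_r(B)=B'$; $rb(MN)=M'N'$ if $rb(M)=M'$, $ar2_r(N)=N'$, subject to: for $p\in\{la,ar2\}$, $p_r\in\{\mathrm{id},ev,rb\circ ev\}$ if $p_e=\mathrm{id}$ and $p_r\in\{\mathrm{id},rb\}$ if $p_e=ev$; at least one of $la_r,ar2_r$ is in $\{ev, rb\circ ev\}$ and at least one is in $\{rb,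 rb\circ ev\}$. $su:=ev$ and $hy$ is the template instance with $op_1=su$, $ar_1=ar1_e$, $op_2=hy$, $la=la_h$, $ar_2=ar2_h$ where for $p\in\{la,ar2\}$: $p_h=\mathrm{id}$ if $p_r=p_e=\mathrm{id}$; $p_h=su$ if $(p_r,p_e)\in\{(\mathrm{id},ev),(ev,\mathrm{id})\}$; $p_h=hy$ if $p_r\in\{rb, rb\circ ev\}$. A strategy $st_2$ absorbs $st_1$ iff $st_2\circ st_1=st_2$. *)

theory Defs
  imports Main
begin

section \<open>Lambda terms (de Bruijn representation, i.e. terms up to alpha-conversion)\<close>

datatype dB = Var nat | App dB dB | Abs dB

primrec lift :: "dB \<Rightarrow> nat \<Rightarrow> dB" where
  "lift (Var i) k = (if i < k then Var i else Var (Suc i))"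
| "lift (App s t) k = App (lift s k) (lift t k)"
| "lift (Abs s) k = Abs (lift s (Suc k))"

primrec subst :: "dB \<Rightarrow> dB \<Rightarrow> nat \<Rightarrow> dB" where
  "subst (Var i) s k = (if k < i then Var (i - 1) else if i = k then s else Var i)"
| "subst (App t u) s k = App (subst t s k) (subst u s k)"
| "subst (Abs t) s k = Abs (subst t (lift s 0) (Suc k))"

text \<open>[N/x]B for a body B of an abstraction: subst B N 0.\<close>

fun is_abs :: "dB \<Rightarrow> bool" where
  "is_abs (Abs _) = True"
| "is_abs _ = False"

datatype choice = Id | Ev

definition apc :: "choice \<Rightarrow> (dB \<Rightarrow> dB \<Rightarrow> bool) \<Rightarrow> dB \<Rightarrow> dB \<Rightarrow> bool" where
  "apc c R t t' = (case c of Id \<Rightarrow> t' = t | Ev \<Rightarrow> R t t')"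

lemma apc_mono[mono]: "(\<And>x y. R x y \<longrightarrow> S x y) \<Longrightarrow> apc c R t t' \<longrightarrow> apc c S t t'"
  by (cases c) (auto simp: apc_def)

datatype rchoice = RId | REv | RRbEv | RRb

definition rapp :: "rchoice \<Rightarrow> (dB \<Rightarrow> dB \<Rightarrow> bool) \<Rightarrow> (dB \<Rightarrow> dB \<Rightarrow> bool) \<Rightarrow> dB \<Rightarrow> dB \<Rightarrow> bool" where
  "rapp c E R t t' = (case c of RId \<Rightarrow> t' = t | REv \<Rightarrow> E t t'
      | RRbEv \<Rightarrow> (\<exists>u. E t u \<and> R u t') | RRb \<Rightarrow> R t t')"

lemma rapp_mono[mono]: "(\<And>x y. R x y \<longrightarrow> S x y) \<Longrightarrow> rapp c E R t t' \<longrightarrow> rapp c E S t t'"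
  by (cases c) (auto simp: rapp_def)

datatype hchoice = HId | HSu | HHy

definition happ :: "hchoice \<Rightarrow> (dB \<Rightarrow> dB \<Rightarrow> bool) \<Rightarrow> (dB \<Rightarrow> dB \<Rightarrow> bool) \<Rightarrow> dB \<Rightarrow> dB \<Rightarrow> bool" where
  "happ c S H t t' = (case c of HId \<Rightarrow> t' = t | HSu \<Rightarrow> S t t' | HHy \<Rightarrow> H t t')"

lemma happ_mono[mono]: "(\<And>x y. R x y \<longrightarrow> S x y) \<Longrightarrow> happ c E R t t' \<longrightarrow> happ c E S t t'"
  by (cases c) (auto simp: happ_def)

text \<open>p_h from (p_r, p_e). The combinations not listed in the paper are excluded
  by the readback constraints; they are given an arbitrary value here.\<close>
fun hch :: "rchoice \<Rightarrow> choice \<Rightarrow> hchoice" where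
  "hch RId Id = HId"
| "hch RId Ev = HSu"
| "hch REv Id = HSu"
| "hch RRb _ = HHy"
| "hch RRbEv _ = HHy"
| "hch REv Ev = HId"

section \<open>Evaluators as (functional) relations: R t t' means the evaluator maps t to t'\<close>

text \<open>Uniform evaluator ev (eval-apply template with op1 = ev, op2 = id).\<close>
inductive ev :: "choice \<Rightarrow> choice \<Rightarrow> choice \<Rightarrow> dB \<Rightarrow> dB \<Rightarrow> bool"
  for lae ar1e ar2e where
  ev_var: "ev lae ar1e ar2e (Var i) (Var i)"
| ev_abs: "apc lae (ev lae ar1e ar2e) B B' \<Longrightarrow> ev lae ar1e ar2e (Abs B) (Abs B')"
| ev_con: "ev lae ar1e ar2e M (Abs B) \<Longrightarrow> apc ar1e (ev lae ar1e ar2e) N N' \<Longrightarrow>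
           ev lae ar1e ar2e (subst B N' 0) B' \<Longrightarrow> ev lae ar1e ar2e (App M N) B'"
| ev_neu: "ev lae ar1e ar2e M M' \<Longrightarrow> \<not> is_abs M' \<Longrightarrow> apc ar2e (ev lae ar1e ar2e) N N' \<Longrightarrow>
           ev lae ar1e ar2e (App M N) (App M' N')"

text \<open>Readback rb (not needed for the statement itself, given for completeness).\<close>
inductive rb :: "choice \<Rightarrow> choice \<Rightarrow> choice \<Rightarrow> rchoice \<Rightarrow> rchoice \<Rightarrow> dB \<Rightarrow> dB \<Rightarrow> bool"
  for lae ar1e ar2e lar ar2r where
  rb_var: "rb lae ar1e ar2e lar ar2r (Var i) (Var i)"
| rb_abs: "rapp lar (ev lae ar1e ar2e) (rb lae ar1e ar2e lar ar2r) B B' \<Longrightarrow>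
           rb lae ar1e ar2e lar ar2r (Abs B) (Abs B')"
| rb_app: "rb lae ar1e ar2e lar ar2r M M' \<Longrightarrow>
           rapp ar2r (ev lae ar1e ar2e) (rb lae ar1e ar2e lar ar2r) N N' \<Longrightarrow>
           rb lae ar1e ar2e lar ar2r (App M N) (App M' N')"

text \<open>Hybrid evaluator hy: op1 = su = ev, ar1 = ar1_e, op2 = hy, la = la_h, ar2 = ar2_h.\<close>
inductive hy :: "choice \<Rightarrow> choice \<Rightarrow> choice \<Rightarrow> hchoice \<Rightarrow> hchoice \<Rightarrow> dB \<Rightarrow> dB \<Rightarrow> bool"
  for lae ar1e ar2e lah ar2h where
  hy_var: "hy lae ar1e ar2e lah ar2h (Var i) (Var i)"
| hy_abs: "happ lah (ev lae ar1e ar2e) (hy lae ar1e ar2e lah ar2h) B B' \<Longrightarrow>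
           hy lae ar1e ar2e lah ar2h (Abs B) (Abs B')"
| hy_con: "ev lae ar1e ar2e M (Abs B) \<Longrightarrow> apc ar1e (ev lae ar1e ar2e) N N' \<Longrightarrow>
           hy lae ar1e ar2e lah ar2h (subst B N' 0) B' \<Longrightarrow> hy lae ar1e ar2e lah ar2h (App M N) B'"
| hy_neu: "ev lae ar1e ar2e M M' \<Longrightarrow> \<not> is_abs M' \<Longrightarrow> hy lae ar1e ar2e lah ar2h M' M'' \<Longrightarrow>
           happ ar2h (ev lae ar1e ar2e) (hy lae ar1e ar2e lah ar2h) N N' \<Longrightarrow>
           hy lae ar1e ar2e lah ar2h (App M N) (App M'' N')"

definition rb_ok :: "choice \<Rightarrow> choice \<Rightarrow> rchoice \<Rightarrow> rchoice \<Rightarrow> bool" where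
  "rb_ok lae ar2e lar ar2r \<longleftrightarrow>
     (lae = Id \<longrightarrow> lar \<in> {RId, REv, RRbEv}) \<and> (lae = Ev \<longrightarrow> lar \<in> {RId, RRb}) \<and>
     (ar2e = Id \<longrightarrow> ar2r \<in> {RId, REv, RRbEv}) \<and> (ar2e = Ev \<longrightarrow> ar2r \<in> {RId, RRb}) \<and>
     (lar \<in> {REv, RRbEv} \<or> ar2r \<in> {REv, RRbEv}) \<and>
     (lar \<in> {RRb, RRbEv} \<or> ar2r \<in> {RRb, RRbEv})"

end

theory Submission
  imports Defs
begin

lemma ev_det:
  "ev a b c t u \<Longrightarrow> ev a b c t u' \<Longrightarrow> u' = u"
proof (induction arbitrary: u' rule: ev.induct)
  case (ev_var i) then show ?case by (cases rule: ev.cases) auto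
next
  case (ev_abs B B')
  from ev_abs.prems obtain B2 where "u' = Abs B2" "apc a (ev a b c) B B2"
    by (cases rule: ev.cases) auto
  then show ?case using ev_abs.IH by (cases a) (auto simp: apc_def)
next
  case (ev_con M B N N' B')
  from ev_con.prems show ?case
  proof (cases rule: ev.cases)
    case (ev_con B2 N2)
    have "Abs B2 = Abs B" using ev_con.IH(1) ev_con by auto
    moreover have "N2 = N'" using ev_con.IH(2) ev_con
      by (cases b) (auto simp: apc_def)
    ultimately show ?thesis using ev_con.IH(3) ev_con by auto
  next
    case (ev_neu M' N2)
    then have "M' = Abs B" using ev_con.IH(1) by blast
    then show ?thesis using ev_neu by simp
  qed
next
  case (ev_neu M M' N N')
  from ev_neu.prems show ?case
  proof (cases rule: ev.cases)
    case (ev_con B2 N2)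
    then have "Abs B2 = M'" using ev_neu.IH(1) by blast
    then show ?thesis using ev_neu.hyps(2) by auto
  next
    case (ev_neu M2 N2)
    then have "M2 = M'" using ev_neu.IH(1) by blast
    moreover have "N2 = N'" using ev_neu.IH(2) ev_neu
      by (cases c) (auto simp: apc_def)
    ultimately show ?thesis using ev_neu by simp
  qed
qed

lemma ev_idem: "ev a b c t u \<Longrightarrow> ev a b c u u"
proof (induction rule: ev.induct)
  case (ev_var i) then show ?case by (rule ev.ev_var)
next
  case (ev_abs B B')
  then show ?case by (cases a) (auto simp: apc_def intro: ev.ev_abs)
next
  case (ev_con M B N N' B')
  then show ?case by blast
next
  case (ev_neu M M' N N')
  have "apc c (ev a b c) N' N'" using ev_neu.IH(2) by (cases c) (auto simp: apc_def)
  then show ?case using ev_neu by (blast intro: ev.ev_neu)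
qed

lemma dir1:
  assumes ok: "(lae = Ev \<longrightarrow> lah \<noteq> HId) \<and> (ar2e = Ev \<longrightarrow> ar2h \<noteq> HId)"
  shows "ev lae ar1e ar2e t u \<Longrightarrow> hy lae ar1e ar2e lah ar2h u v \<Longrightarrow> hy lae ar1e ar2e lah ar2h t v"
proof (induction arbitrary: v rule: ev.induct)
  case (ev_var i) then show ?case by simp
next
  case (ev_abs B B')
  from ev_abs.prems obtain B'' where v: "v = Abs B''"
    and h: "happ lah (ev lae ar1e ar2e) (hy lae ar1e ar2e lah ar2h) B' B''"
    by (cases rule: hy.cases) auto
  have "happ lah (ev lae ar1e ar2e) (hy lae ar1e ar2e lah ar2h) B B''"
  proof (cases lae)
    case Id then show ?thesis using h ev_abs.IH by (simp add: apc_def)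
  next
    case Ev
    then have e: "ev lae ar1e ar2e B B'" and ih: "\<And>v. hy lae ar1e ar2e lah ar2h B' v \<Longrightarrow> hy lae ar1e ar2e lah ar2h B v"
      using ev_abs.IH by (auto simp: apc_def)
    show ?thesis using h ok Ev e ih ev_idem[OF e] ev_det[OF ev_idem[OF e]]
      by (cases lah) (auto simp: happ_def)
  qed
  then show ?case using v by (simp add: hy.hy_abs)
next
  case (ev_con M B N N' B')
  then show ?case by (auto intro: hy.hy_con simp: apc_def split: choice.splits)
next
  case (ev_neu M M' N N')
  have idm: "ev lae ar1e ar2e M' M'" using ev_neu.hyps(1) by (rule ev_idem)
  from ev_neu.prems show ?case
  proof (cases rule: hy.cases)
    case (hy_con B N2)
    then show ?thesis using ev_det[OF idm] ev_neu.hyps(2) by fastforce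
  next
    case (hy_neu M1 M'' N'')
    have M1: "M1 = M'" using hy_neu ev_det[OF idm] by blast
    have "happ ar2h (ev lae ar1e ar2e) (hy lae ar1e ar2e lah ar2h) N N''"
    proof (cases ar2e)
      case Id then show ?thesis using hy_neu ev_neu.IH by (simp add: apc_def)
    next
      case Ev
      then have e: "ev lae ar1e ar2e N N'" and ih: "\<And>v. hy lae ar1e ar2e lah ar2h N' v \<Longrightarrow> hy lae ar1e ar2e lah ar2h N v"
        using ev_neu.IH by (auto simp: apc_def)
      show ?thesis using hy_neu ok Ev e ih ev_idem[OF e] ev_det[OF ev_idem[OF e]]
        by (cases ar2h) (auto simp: happ_def)
    qed
    then show ?thesis using hy_neu M1 ev_neu.hyps by (auto intro: hy.hy_neu)
  qed
qed

lemma dir2: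
  assumes ok: "(lae = Ev \<longrightarrow> lah \<noteq> HId) \<and> (ar2e = Ev \<longrightarrow> ar2h \<noteq> HId)"
  shows "hy lae ar1e ar2e lah ar2h t v \<Longrightarrow> \<exists>u. ev lae ar1e ar2e t u \<and> hy lae ar1e ar2e lah ar2h u v"
proof (induction rule: hy.induct)
  case (hy_var i) then show ?case by (auto intro: ev.ev_var hy.hy_var)
next
  case (hy_abs B B')
  show ?case
  proof (cases lae)
    case Id
    then show ?thesis using hy_abs
      by (intro exI[of _ "Abs B"]) (auto simp: apc_def happ_def intro: ev.ev_abs hy.hy_abs split: hchoice.splits)
  next
    case Ev
    show ?thesis
    proof (cases lah)
      case HId then show ?thesis using ok Ev by simp
    next
      case HSu
      then have e: "ev lae ar1e ar2e B B'" using hy_abs by (simp add: happ_def)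
      show ?thesis using e ev_idem[OF e] HSu Ev
        by (intro exI[of _ "Abs B'"]) (auto simp: apc_def happ_def intro: ev.ev_abs hy.hy_abs)
    next
      case HHy
      then obtain w where "ev lae ar1e ar2e B w" "hy lae ar1e ar2e lah ar2h w B'"
        using hy_abs by (auto simp: happ_def)
      then show ?thesis using HHy Ev
        by (intro exI[of _ "Abs w"]) (auto simp: apc_def happ_def intro: ev.ev_abs hy.hy_abs)
    qed
  qed
next
  case (hy_con M B N N' B')
  then obtain w where "ev lae ar1e ar2e (subst B N' 0) w" "hy lae ar1e ar2e lah ar2h w B'" by blast
  then show ?case using hy_con.hyps(1,2)
    by (intro exI[of _ w]) (auto intro: ev.ev_con apc_mono[rule_format, rotated])
next
  case (hy_neu M M' M'' N N')
  have idm: "ev lae ar1e ar2e M' M'" using hy_neu.hyps(1) by (rule ev_idem)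
  obtain N0 where a: "apc ar2e (ev lae ar1e ar2e) N N0"
    and b: "happ ar2h (ev lae ar1e ar2e) (hy lae ar1e ar2e lah ar2h) N0 N'"
  proof (cases ar2e)
    case Id
    then show ?thesis using that[of N] hy_neu.IH(2)
      by (cases ar2h) (auto simp: apc_def happ_def)
  next
    case Ev
    show ?thesis
    proof (cases ar2h)
      case HId then show ?thesis using ok Ev by simp
    next
      case HSu
      then have e: "ev lae ar1e ar2e N N'" using hy_neu.IH(2) by (simp add: happ_def)
      show ?thesis using that[of N'] e ev_idem[OF e] HSu Ev by (simp add: apc_def happ_def)
    next
      case HHy
      then obtain w where "ev lae ar1e ar2e N w" "hy lae ar1e ar2e lah ar2h w N'"
        using hy_neu.IH(2) by (auto simp: happ_def)
      then show ?thesis using that[of w] HHy Ev by (simp add: apc_def happ_def)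
    qed
  qed
  have "apc ar2e (ev lae ar1e ar2e) N N0" using a .
  show ?case
    apply (rule exI[of _ "App M' N0"])
    using hy_neu.hyps(1,2) a b idm hy_neu.IH(1)
    by (auto intro!: ev.ev_neu hy.hy_neu dest: ev_det)
qed

theorem mainTheorem11:
  assumes "rb_ok lae ar2e lar ar2r"
  shows "(ev lae ar1e ar2e) OO (hy lae ar1e ar2e (hch lar lae) (hch ar2r ar2e))
           = hy lae ar1e ar2e (hch lar lae) (hch ar2r ar2e)"
proof -
  have ok: "(lae = Ev \<longrightarrow> hch lar lae \<noteq> HId) \<and> (ar2e = Ev \<longrightarrow> hch ar2r ar2e \<noteq> HId)"
    using assms by (cases lar; cases ar2r; auto simp: rb_ok_def)
  show ?thesis
    using dir1[OF ok] dir2[OF ok] by (intro ext) blast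
qed

end
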